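(* Let $M,N\ge 1$ be integers, and let $l,k\in\mathbb{R}$, $\alpha\in\mathbb{C}$, $E_s,E_p>0$, $\sigma^2>0$, $N_r\ge 1$. Fix a delay index $m_p\in\{0,\dots,M-1\}$ and a Doppler index $n_p\in\{0,\dots,N-1\}$. Let $\mathbf{X}_d\in\mathbb{C}^{M\times N}$ be a data matrix with $\mathbf{x}_d=\mathrm{vec}(\mathbf{X}_d)$, and let the pilot vector be $$\mathbf{x}_p=(\mathbf{1}_N\otimes\mathbf{e}_{m_p})+\mathbf{e}_{n_p}\otimes(\mathbf{1}_M-\mathbf{e}_{m_p})\in\mathbb{C}^{MN},$$ and $\mathbf{x}=\sqrt{E_s}\,\mathbf{x}_d+\sqrt{E_p}\,\mathbf{x}_p$. Suppose the delay-Doppler observation is $$\mathbf{y}=\alpha\big(\mathbf{F}_N\mathbf{D}_N^{k}\mathbf{F}_N^{\mathsf{H}}\otimes\tilde{\mathbf{D}}_M^{k}\mathbf{C}_M(l)\big)\mathbf{x}+\mathbf{z},\qquad \mathbf{z}\sim\mathcal{CN}\big(\mathbf{0}_{MN},\tfrac{\sigma^2}{N_r}\mathbf{I}_{MN}\big),$$ and define the integrated delay profile $\mathbf{u}=\frac{1}{N}(\mathbf{1}_N^\top\otimes\mathbf{I}_M)\mathbf{y}\in\mathbb{C}^M$ (equivalently $\mathbf{u}=\mathbf{Y}\mathbf{1}_N/N$ where $\mathbf{y}=\mathrm{vec}(\mathbf{Y})$, $\mathbf{Y}\in\mathbb{C}^{M\times N}$). Then $$\mathbf{u}=\alpha\Big(\frac{\sqrt{E_p}}{N}\mathbf{g}_u(l,k)+\frac{\sqrt{E_s}}{N}\tilde{\mathbf{D}}_M^{k}\mathbf{C}_M(l)\sum_{n=0}^{N-1}[\mathbf{X}_d]_{:,n}\Big)+\tilde{\mathbf{z}}_u,$$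 where $\tilde{\mathbf{z}}_u\sim\mathcal{CN}\big(\mathbf{0}_M,\frac{\sigma^2}{NN_r}\mathbf{I}_M\big)$ and $$\mathbf{g}_u(l,k)=(N-1)\,\tilde{\mathbf{D}}_M^{k}\mathbf{F}_M^{\mathsf{H}}\big([\mathbf{F}_M]_{:,m_p}\odot\mathbf{d}_M^{-l}\big)+\tilde{\mathbf{d}}_M^{k}.$$
   Context: Indices of vectors and matrices start at $0$. $\mathbf{e}_i$ denotes the $i$-th canonical basis vector (of the appropriate dimension), $\mathbf{1}_K$ the all-ones vector of length $K$, $\mathbf{0}_K$ the zero vector, $\mathbf{I}_K$ the identity, $\otimes$ the Kronecker product, $\odot$ the elementwise product, and $\mathrm{vec}$ stacks columns (column-major). $[\mathbf{A}]_{:,n}$ is the $n$-th column of $\mathbf{A}$. $\mathbf{F}_K$ is the unitary $K$-point DFT matrix, $[\mathbf{F}_K]_{p,q}=\frac{1}{\sqrt{K}}e^{-j2\pi pq/K}$. $\mathbf{D}_N$ is diagonal with $[\mathbf{D}_N]_{n,n}=e^{j2\pi n/N}$, $\mathbf{D}_M$ is diagonal with $[\mathbf{D}_M]_{m,m}=e^{j2\pi m/M}$, and $\tilde{\mathbf{D}}_M$ is diagonal with $[\tilde{\mathbf{D}}_M]_{m,m}=e^{j\frac{2\pi}{MN}\frac{mT}{T'}}$ for fixed constants $0<T<T'$. Real powers of these diagonal matrices are taken entrywise on the diagonal (e.g. $[\mathbf{D}_N^{k}]_{n,n}=e^{j2\pi nk/N}$), $\mathbf{d}_M=\mathrm{diag}(\mathbf{D}_M)$,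 $\tilde{\mathbf{d}}_M=\mathrm{diag}(\tilde{\mathbf{D}}_M)$ are the diagonal vectors and vector powers are entrywise. The delay matrix is $\mathbf{C}_M(l)=\mathbf{F}_M^{\mathsf{H}}(\mathbf{D}_M^{*})^{l}\mathbf{F}_M$. $\mathcal{CN}(\mathbf{0},\mathbf{\Sigma})$ is the circularly symmetric complex Gaussian distribution. *)

theory Defs
  imports "HOL-Probability.Probability"
begin

text \<open>Matrices are functions nat => nat => complex, vectors nat => complex;
  dimensions are carried explicitly in the sums. Indices start at 0.\<close>

definition mm :: "nat \<Rightarrow> (nat \<Rightarrow> nat \<Rightarrow> complex) \<Rightarrow> (nat \<Rightarrow> nat \<Rightarrow> complex) \<Rightarrow> nat \<Rightarrow> nat \<Rightarrow> complex"
  where "mm n A B i j = (\<Sum>q<n. A i q * B q j)"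

definition mv :: "nat \<Rightarrow> (nat \<Rightarrow> nat \<Rightarrow> complex) \<Rightarrow> (nat \<Rightarrow> complex) \<Rightarrow> nat \<Rightarrow> complex"
  where "mv n A x i = (\<Sum>q<n. A i q * x q)"

definition diagm :: "(nat \<Rightarrow> complex) \<Rightarrow> nat \<Rightarrow> nat \<Rightarrow> complex"
  where "diagm d i j = (if i = j then d i else 0)"

definition idm :: "nat \<Rightarrow> nat \<Rightarrow> complex"
  where "idm i j = (if i = j then 1 else 0)"

definition ev :: "nat \<Rightarrow> nat \<Rightarrow> complex"
  where "ev i j = (if j = i then 1 else 0)"

text \<open>Kronecker product A (x) B where B has p rows and q columns.\<close>
definition kron :: "nat \<Rightarrow> nat \<Rightarrow> (nat \<Rightarrow> nat \<Rightarrow> complex) \<Rightarrow> (nat \<Rightarrow> nat \<Rightarrow> complex) \<Rightarrow> nat \<Rightarrow> nat \<Rightarrow> complex"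
  where "kron p q A B i j = A (i div p) (j div q) * B (i mod p) (j mod q)"

text \<open>Kronecker product of vectors a (x) b where b has length p.\<close>
definition kronv :: "nat \<Rightarrow> (nat \<Rightarrow> complex) \<Rightarrow> (nat \<Rightarrow> complex) \<Rightarrow> nat \<Rightarrow> complex"
  where "kronv p a b i = a (i div p) * b (i mod p)"

text \<open>column-major vectorisation of an M x N matrix\<close>
definition vecm :: "nat \<Rightarrow> (nat \<Rightarrow> nat \<Rightarrow> complex) \<Rightarrow> nat \<Rightarrow> complex"
  where "vecm M X i = X (i mod M) (i div M)"

definition Fm :: "nat \<Rightarrow> nat \<Rightarrow> nat \<Rightarrow> complex"
  where "Fm K p q = exp (- (2 * pi * \<i> * of_nat p * of_nat q / of_nat K)) / of_real (sqrt (real K))"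

definition FHm :: "nat \<Rightarrow> nat \<Rightarrow> nat \<Rightarrow> complex"
  where "FHm K p q = cnj (Fm K q p)"

text \<open>d_M (diagonal of D_M) raised entrywise to a real power r\<close>
definition dM_pow :: "nat \<Rightarrow> real \<Rightarrow> nat \<Rightarrow> complex"
  where "dM_pow M r m = exp (\<i> * of_real (2 * pi * real m * r / real M))"

definition DN_pow :: "nat \<Rightarrow> real \<Rightarrow> nat \<Rightarrow> nat \<Rightarrow> complex"
  where "DN_pow N k = diagm (dM_pow N k)"

definition DMconj_pow :: "nat \<Rightarrow> real \<Rightarrow> nat \<Rightarrow> nat \<Rightarrow> complex"
  where "DMconj_pow M l = diagm (\<lambda>m. cnj (dM_pow M l m))"

text \<open>tilde d_M raised entrywise to the real power k; T, T' are the fixed constants\<close>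
definition dt_pow :: "nat \<Rightarrow> nat \<Rightarrow> real \<Rightarrow> real \<Rightarrow> real \<Rightarrow> nat \<Rightarrow> complex"
  where "dt_pow M N T T' k m = exp (\<i> * of_real (2 * pi / (real M * real N) * (real m * T / T') * k))"

definition Dt_pow :: "nat \<Rightarrow> nat \<Rightarrow> real \<Rightarrow> real \<Rightarrow> real \<Rightarrow> nat \<Rightarrow> nat \<Rightarrow> complex"
  where "Dt_pow M N T T' k = diagm (dt_pow M N T T' k)"

definition Cm :: "nat \<Rightarrow> real \<Rightarrow> nat \<Rightarrow> nat \<Rightarrow> complex"
  where "Cm M l = mm M (mm M (FHm M) (DMconj_pow M l)) (Fm M)"

definition pilot :: "nat \<Rightarrow> nat \<Rightarrow> nat \<Rightarrow> nat \<Rightarrow> complex"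
  where "pilot M mp np i = kronv M (\<lambda>_. 1) (ev mp) i + kronv M (ev np) (\<lambda>j. 1 - ev mp j) i"

definition Hm :: "nat \<Rightarrow> nat \<Rightarrow> real \<Rightarrow> real \<Rightarrow> real \<Rightarrow> real \<Rightarrow> nat \<Rightarrow> nat \<Rightarrow> complex"
  where "Hm M N T T' l k = kron M M (mm N (mm N (Fm N) (DN_pow N k)) (FHm N))
                                      (mm M (Dt_pow M N T T' k) (Cm M l))"

definition gu :: "nat \<Rightarrow> nat \<Rightarrow> real \<Rightarrow> real \<Rightarrow> nat \<Rightarrow> real \<Rightarrow> real \<Rightarrow> nat \<Rightarrow> complex"
  where "gu M N T T' mp l k m =
     of_nat (N - 1) * mv M (mm M (Dt_pow M N T T' k) (FHm M)) (\<lambda>q. Fm M q mp * dM_pow M (- l) q) m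
     + dt_pow M N T T' k m"

text \<open>scalar circularly symmetric complex Gaussian CN(0,s): real and imaginary parts
  independent N(0, s/2)\<close>
definition cgauss :: "real \<Rightarrow> complex measure"
  where "cgauss s = distr (density lborel (normal_density 0 (sqrt (s/2)))
                            \<Otimes>\<^sub>M density lborel (normal_density 0 (sqrt (s/2))))
                           borel (\<lambda>(a, b). Complex a b)"

text \<open>CN(0_K, s I_K): i.i.d. CN(0,s) entries, as a measure on vectors indexed by {..<K}\<close>
definition cn_iid :: "nat \<Rightarrow> real \<Rightarrow> (nat \<Rightarrow> complex) measure"
  where "cn_iid K s = PiM {..<K} (\<lambda>_. cgauss s)"

definition has_cn_iid :: "'w measure \<Rightarrow> nat \<Rightarrow> real \<Rightarrow> ('w \<Rightarrow> nat \<Rightarrow> complex) \<Rightarrow> bool"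
  where "has_cn_iid P K s z \<longleftrightarrow>
           z \<in> measurable P (PiM {..<K} (\<lambda>_. borel)) \<and>
           distr P (PiM {..<K} (\<lambda>_. borel)) z = cn_iid K s"

end

theory Submission
  imports Defs
begin
lemma Fm_sym: "Fm K p q = Fm K q p"
  unfolding Fm_def by (simp add: mult.commute mult.left_commute)

lemma geo_root: 
  assumes "0 < q" "q < K"
  shows "(\<Sum>p<K. exp (- (2 * pi * \<i> * of_nat p * of_nat q / of_nat K))) = (0::complex)"
proof -
  define w :: complex where "w = exp (- (of_real (2 * pi) * \<i> * of_nat q / of_nat K))"
  have e: "exp (- (2 * pi * \<i> * of_nat p * of_nat q / of_nat K)) = w ^ p" for p
  proof -
    have "- (2 * pi * \<i> * of_nat p * of_nat q / of_nat K) = of_nat p * (- (2 * pi * \<i> * of_nat q / of_nat K))"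
      by (simp add: algebra_simps)
    then show ?thesis unfolding w_def by (simp only: exp_of_nat_mult)
  qed
  have wK: "w ^ K = 1"
  proof -
    have "w ^ K = exp (of_nat K * (- (2 * pi * \<i> * of_nat q / of_nat K)))"
      unfolding w_def by (simp only: exp_of_nat_mult)
    also have "of_nat K * (- (2 * pi * \<i> * of_nat q / of_nat K)) = - (2 * pi * \<i> * of_nat q)"
      using assms by (simp add: field_simps)
    also have "exp (- (2 * pi * \<i> * of_nat q)) = 1"
      unfolding exp_eq_1 by (auto intro!: exI[of _ "- int q"])
    finally show ?thesis .
  qed
  have w1: "w \<noteq> 1"
  proof
    assume "w = 1"
    then obtain n :: int where n: "- (2 * pi * real q / real K) = of_int (2 * n) * pi"
      unfolding w_def exp_eq_1 by auto
    have K0: "real K > 0" using assms by simp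
    from n have "(2 * pi) * (- (real q / real K)) = (2 * pi) * of_int n" using K0 by (simp add: field_simps)
    then have "- (real q / real K) = of_int n" by (subst (asm) mult_left_cancel) auto
    moreover have "0 < real q / real K" "real q / real K < 1" using assms by auto
    ultimately have "- 1 < (of_int n::real)" "of_int n < (0::real)" by linarith+
    then have "- 1 < n" "n < 0" by linarith+
    then show False by simp
  qed
  show ?thesis unfolding e using geometric_sum[OF w1, of K] wK by simp
qed

lemma Fm_colsum:
  assumes "q < K"
  shows "(\<Sum>p<K. Fm K p q) = (if q = 0 then of_real (sqrt (real K)) else 0)"
proof (cases "q = 0")
  case True
  have "(\<Sum>p<K. Fm K p q) = of_nat K / of_real (sqrt (real K))"
    using True by (simp add: Fm_def)
  also have "\<dots> = of_real (real K / sqrt (real K))"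
    by simp
  also have "\<dots> = of_real (sqrt (real K))"
    by (simp add: real_div_sqrt)
  finally show ?thesis using True by simp
next
  case False
  have "(\<Sum>p<K. Fm K p q) = (\<Sum>p<K. exp (- (2 * pi * \<i> * of_nat p * of_nat q / of_nat K))) / of_real (sqrt (real K))"
    unfolding Fm_def by (simp add: sum_divide_distrib)
  then show ?thesis using geo_root[of q K] False assms by simp
qed

lemma Fm_rowsum:
  assumes "q < K"
  shows "(\<Sum>p<K. Fm K q p) = (if q = 0 then of_real (sqrt (real K)) else 0)"
  using Fm_colsum[OF assms] by (simp add: Fm_sym)


lemma sum_split_MN:
  fixes f :: "nat \<Rightarrow> 'a::comm_monoid_add"
  shows "(\<Sum>i<M * N. f i) = (\<Sum>n<N. \<Sum>r<M. f (n * M + r))"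
proof -
  have "(\<Sum>i<M * N. f i) = (\<Sum>n<N. sum f {n * M..<n * M + M})"
    using sum.nat_group[of f M N] by (simp add: mult.commute)
  also have "\<dots> = (\<Sum>n<N. \<Sum>r<M. f (n * M + r))"
  proof (rule sum.cong[OF refl])
    fix n
    have "sum f {n * M..<n * M + M} = sum f {0 + n * M..<M + n * M}" by (simp add: add.commute)
    also have "\<dots> = (\<Sum>r = 0..<M. f (r + n * M))" by (rule sum.shift_bounds_nat_ivl)
    finally show "sum f {n * M..<n * M + M} = (\<Sum>r<M. f (n * M + r))"
      by (simp add: atLeast0LessThan add.commute)
  qed
  finally show ?thesis .
qed

lemma sum_diagm_right: "p < n \<Longrightarrow> (\<Sum>q<n. f q * diagm d q p) = f p * d p"
proof -
  assume p: "p < n"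
  have "(\<Sum>q<n. f q * diagm d q p) = (\<Sum>q<n. if q = p then f p * d p else 0)"
    by (rule sum.cong) (auto simp: diagm_def)
  then show ?thesis using p by simp
qed

lemma sum_diagm_left: "p < n \<Longrightarrow> (\<Sum>q<n. diagm d p q * f q) = d p * f p"
proof -
  assume p: "p < n"
  have "(\<Sum>q<n. diagm d p q * f q) = (\<Sum>q<n. if q = p then d p * f p else 0)"
    by (rule sum.cong) (auto simp: diagm_def)
  then show ?thesis using p by simp
qed

lemma mm_diag_right: "p < n \<Longrightarrow> mm n A (diagm d) i p = A i p * d p"
  by (simp add: mm_def sum_diagm_right)

lemma mm_diag_left: "i < n \<Longrightarrow> mm n (diagm d) A i p = d i * A i p"
  by (simp add: mm_def sum_diagm_left)

lemma FHm_0: "FHm K m 0 = 1 / of_real (sqrt (real K))"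
  by (simp add: FHm_def Fm_def)

lemma Fm_0: "Fm K 0 m = 1 / of_real (sqrt (real K))"
  by (simp add: Fm_def)

lemma cnj_dM: "cnj (dM_pow M l q) = dM_pow M (- l) q"
  by (simp add: dM_pow_def exp_cnj)

lemma A_colsum:
  assumes "N \<ge> 1" "n' < N"
  shows "(\<Sum>n<N. mm N (mm N (Fm N) (DN_pow N k)) (FHm N) n n') = 1"
proof -
  have "(\<Sum>n<N. mm N (mm N (Fm N) (DN_pow N k)) (FHm N) n n')
      = (\<Sum>n<N. \<Sum>p<N. Fm N n p * dM_pow N k p * FHm N p n')"
    unfolding mm_def[of N _ "FHm N"] DN_pow_def by (intro sum.cong refl) (simp add: mm_diag_right)
  also have "\<dots> = (\<Sum>p<N. (\<Sum>n<N. Fm N n p) * dM_pow N k p * FHm N p n')"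
    by (subst sum.swap) (simp add: sum_distrib_right)
  also have "\<dots> = (\<Sum>p<N. (if p = 0 then of_real (sqrt (real N)) * dM_pow N k 0 * FHm N 0 n' else 0))"
    by (rule sum.cong) (auto simp: Fm_colsum)
  also have "\<dots> = of_real (sqrt (real N)) * dM_pow N k 0 * FHm N 0 n'"
    using assms by simp
  also have "\<dots> = 1"
    using assms by (simp add: dM_pow_def FHm_def Fm_def)
  finally show ?thesis .
qed

lemma Cm_entry: "Cm M l a b = (\<Sum>q<M. FHm M a q * cnj (dM_pow M l q) * Fm M q b)"
  unfolding Cm_def mm_def[of M _ "Fm M"] DMconj_pow_def by (intro sum.cong refl) (simp add: mm_diag_right)

lemma B_entry:
  assumes "m < M"
  shows "mm M (Dt_pow M N T T' k) (Cm M l) m b = dt_pow M N T T' k m * Cm M l m b"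
  using assms by (simp add: Dt_pow_def mm_diag_left)

lemma B_mp:
  assumes "m < M" "mp < M"
  shows "mm M (Dt_pow M N T T' k) (Cm M l) m mp =
         mv M (mm M (Dt_pow M N T T' k) (FHm M)) (\<lambda>q. Fm M q mp * dM_pow M (- l) q) m"
proof -
  have "mv M (mm M (Dt_pow M N T T' k) (FHm M)) (\<lambda>q. Fm M q mp * dM_pow M (- l) q) m
      = (\<Sum>q<M. dt_pow M N T T' k m * FHm M m q * (Fm M q mp * dM_pow M (- l) q))"
    using assms by (simp add: mv_def Dt_pow_def mm_diag_left)
  also have "\<dots> = dt_pow M N T T' k m * (\<Sum>q<M. FHm M m q * cnj (dM_pow M l q) * Fm M q mp)"
    by (simp add: sum_distrib_left cnj_dM mult_ac)
  finally show ?thesis using assms by (simp add: B_entry Cm_entry)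
qed

lemma B_rowsum:
  assumes "m < M"
  shows "(\<Sum>r<M. mm M (Dt_pow M N T T' k) (Cm M l) m r) = dt_pow M N T T' k m"
proof -
  have "(\<Sum>r<M. mm M (Dt_pow M N T T' k) (Cm M l) m r)
     = dt_pow M N T T' k m * (\<Sum>r<M. \<Sum>q<M. FHm M m q * cnj (dM_pow M l q) * Fm M q r)"
    using assms by (simp add: B_entry Cm_entry sum_distrib_left)
  also have "(\<Sum>r<M. \<Sum>q<M. FHm M m q * cnj (dM_pow M l q) * Fm M q r)
      = (\<Sum>q<M. FHm M m q * cnj (dM_pow M l q) * (\<Sum>r<M. Fm M q r))"
    by (subst sum.swap) (simp add: sum_distrib_left)
  also have "\<dots> = (\<Sum>q<M. if q = 0 then FHm M m 0 * cnj (dM_pow M l 0) * of_real (sqrt (real M)) else 0)"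
    by (rule sum.cong) (auto simp: Fm_rowsum)
  also have "\<dots> = 1"
    using assms by (simp add: FHm_0 dM_pow_def)
  finally show ?thesis by simp
qed

lemma pilot_sum:
  assumes "r < M" "np < N" "N \<ge> 1"
  shows "(\<Sum>n<N. pilot M mp np (n * M + r)) = of_nat (N - 1) * ev mp r + 1"
proof -
  have "(\<Sum>n<N. pilot M mp np (n * M + r)) = (\<Sum>n<N. ev mp r + ev np n * (1 - ev mp r))"
    using assms by (simp add: pilot_def kronv_def)
  also have "\<dots> = of_nat N * ev mp r + (1 - ev mp r)"
    using assms by (simp add: sum.distrib sum_distrib_right[symmetric] ev_def)
  also have "\<dots> = of_nat (N - 1) * ev mp r + 1"
    using assms by (simp add: of_nat_diff algebra_simps)
  finally show ?thesis .
qed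


lemma divmod_simps:
  assumes "r < (M::nat)"
  shows "(n * M + r) div M = n" "(n * M + r) mod M = r"
  using assms by auto

lemma u_eq:
  assumes "m < M"
  shows "mv (M * N) (kron M M (\<lambda>_ _. 1) idm) v m = (\<Sum>n<N. v (n * M + m))"
proof -
  have "mv (M * N) (kron M M (\<lambda>_ _. 1) idm) v m = (\<Sum>n<N. \<Sum>r<M. idm m r * v (n * M + r))"
    unfolding mv_def sum_split_MN
    by (intro sum.cong refl) (use assms in \<open>simp add: kron_def divmod_simps\<close>)
  also have "\<dots> = (\<Sum>n<N. v (n * M + m))"
  proof (rule sum.cong[OF refl])
    fix n
    have "(\<Sum>r<M. idm m r * v (n * M + r)) = (\<Sum>r<M. if r = m then v (n * M + m) else 0)"
      by (rule sum.cong) (auto simp: idm_def)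
    then show "(\<Sum>r<M. idm m r * v (n * M + r)) = v (n * M + m)" using assms by simp
  qed
  finally show ?thesis .
qed

lemma H_sum:
  assumes "m < M" "N \<ge> 1"
  shows "(\<Sum>n<N. mv (M * N) (Hm M N T T' l k) x (n * M + m))
       = (\<Sum>r<M. mm M (Dt_pow M N T T' k) (Cm M l) m r * (\<Sum>n'<N. x (n' * M + r)))"
proof -
  let ?A = "mm N (mm N (Fm N) (DN_pow N k)) (FHm N)"
  let ?B = "mm M (Dt_pow M N T T' k) (Cm M l)"
  have "(\<Sum>n<N. mv (M * N) (Hm M N T T' l k) x (n * M + m))
      = (\<Sum>n<N. \<Sum>n'<N. \<Sum>r<M. ?A n n' * (?B m r * x (n' * M + r)))"
    unfolding mv_def sum_split_MN
    by (intro sum.cong refl) (use assms in \<open>simp add: Hm_def kron_def divmod_simps\<close>)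
  also have "\<dots> = (\<Sum>n'<N. \<Sum>r<M. (\<Sum>n<N. ?A n n') * (?B m r * x (n' * M + r)))"
    by (subst sum.swap) (simp add: sum_distrib_right sum.swap[of _ "{..<M}"])
  also have "\<dots> = (\<Sum>n'<N. \<Sum>r<M. ?B m r * x (n' * M + r))"
    by (intro sum.cong refl) (use assms in \<open>simp add: A_colsum\<close>)
  also have "\<dots> = (\<Sum>r<M. ?B m r * (\<Sum>n'<N. x (n' * M + r)))"
    by (subst sum.swap) (simp add: sum_distrib_left)
  finally show ?thesis .
qed


lemma det_final:
  assumes "M \<ge> 1" "N \<ge> 1" "m < M" "mp < M" "np < N"
  shows "(1 / of_nat N) * (\<Sum>n<N. mv (M * N) (Hm M N T T' l k)
            (\<lambda>i. of_real (sqrt Es) * vecm M Xd i + of_real (sqrt Ep) * pilot M mp np i) (n * M + m))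
       = of_real (sqrt Ep) / of_nat N * gu M N T T' mp l k m
         + of_real (sqrt Es) / of_nat N *
             mv M (mm M (Dt_pow M N T T' k) (Cm M l)) (\<lambda>q. \<Sum>n<N. Xd q n) m"
proof -
  let ?B = "mm M (Dt_pow M N T T' k) (Cm M l)"
  let ?x = "\<lambda>i. of_real (sqrt Es) * vecm M Xd i + of_real (sqrt Ep) * pilot M mp np i"
  have xs: "(\<Sum>n'<N. ?x (n' * M + r)) = of_real (sqrt Es) * (\<Sum>n<N. Xd r n)
            + of_real (sqrt Ep) * (of_nat (N - 1) * ev mp r + 1)" if r: "r < M" for r
  proof -
    have "(\<Sum>n'<N. ?x (n' * M + r)) = of_real (sqrt Es) * (\<Sum>n<N. vecm M Xd (n * M + r))
            + of_real (sqrt Ep) * (\<Sum>n<N. pilot M mp np (n * M + r))"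
      by (simp add: sum.distrib sum_distrib_left)
    also have "(\<Sum>n<N. vecm M Xd (n * M + r)) = (\<Sum>n<N. Xd r n)"
      using r by (simp add: vecm_def divmod_simps)
    finally show ?thesis using pilot_sum[OF r assms(5) assms(2)] by simp
  qed
  have ev_sum: "(\<Sum>r<M. ?B m r * ev mp r) = ?B m mp"
  proof -
    have "(\<Sum>r<M. ?B m r * ev mp r) = (\<Sum>r<M. if r = mp then ?B m mp else 0)"
      by (rule sum.cong) (auto simp: ev_def)
    then show ?thesis using assms by simp
  qed
  have "(\<Sum>n<N. mv (M * N) (Hm M N T T' l k) ?x (n * M + m))
      = (\<Sum>r<M. ?B m r * (of_real (sqrt Es) * (\<Sum>n<N. Xd r n)
            + of_real (sqrt Ep) * (of_nat (N - 1) * ev mp r + 1)))"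
    unfolding H_sum[OF assms(3,2)] by (intro sum.cong refl) (simp add: xs)
  also have "\<dots> = of_real (sqrt Es) * mv M ?B (\<lambda>q. \<Sum>n<N. Xd q n) m
      + of_real (sqrt Ep) * (of_nat (N - 1) * (\<Sum>r<M. ?B m r * ev mp r) + (\<Sum>r<M. ?B m r))"
    apply (simp add: mv_def algebra_simps sum.distrib sum_distrib_left)
    apply (simp add: sum_distrib_left[symmetric] mult_ac)
    done
  also have "\<dots> = of_real (sqrt Es) * mv M ?B (\<lambda>q. \<Sum>n<N. Xd q n) m
      + of_real (sqrt Ep) * gu M N T T' mp l k m"
    unfolding ev_sum B_rowsum[OF assms(3)] B_mp[OF assms(3,4)] gu_def by simp
  finally show ?thesis by (simp add: algebra_simps)
qed

lemma Complex_measurable[measurable]: "(\<lambda>(a, b). Complex a b) \<in> borel_measurable (borel \<Otimes>\<^sub>M borel)"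
proof -
  have "(\<lambda>(a, b). Complex a b) = (\<lambda>p. complex_of_real (fst p) + \<i> * complex_of_real (snd p))"
    by (auto simp: Complex_eq fun_eq_iff)
  then show ?thesis by simp
qed

lemma Complex_measurable2[measurable (raw)]:
  "f \<in> borel_measurable M \<Longrightarrow> g \<in> borel_measurable M \<Longrightarrow> (\<lambda>x. Complex (f x) (g x)) \<in> borel_measurable M"
proof -
  assume f: "f \<in> borel_measurable M" and g: "g \<in> borel_measurable M"
  have "(\<lambda>x. Complex (f x) (g x)) = (\<lambda>x. complex_of_real (f x) + \<i> * complex_of_real (g x))"
    by (auto simp: Complex_eq fun_eq_iff)
  then show ?thesis using f g by simp
qed

definition nd :: "real \<Rightarrow> real measure" where
  "nd s = density lborel (normal_density 0 (sqrt (s/2)))"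

lemma nd_prob: "s > 0 \<Longrightarrow> prob_space (nd s)"
  unfolding nd_def by (rule prob_space_normal_density) simp

lemma sets_nd[simp, measurable_cong]: "sets (nd s) = sets borel"
  by (simp add: nd_def)

lemma space_nd[simp]: "space (nd s) = UNIV"
  by (simp add: nd_def)

lemma cgauss_nd: "cgauss s = distr (nd s \<Otimes>\<^sub>M nd s) borel (\<lambda>(a, b). Complex a b)"
  unfolding cgauss_def nd_def ..

lemma prob_cgauss: "s > 0 \<Longrightarrow> prob_space (cgauss s)"
  unfolding cgauss_nd
  by (intro prob_space.prob_space_distr prob_space_pair nd_prob) measurable


lemma distr_nd_fst: "s > 0 \<Longrightarrow> distr (nd s \<Otimes>\<^sub>M nd s) borel fst = nd s"
proof -
  assume s: "s > 0"
  have "distr (nd s \<Otimes>\<^sub>M nd s) borel fst = distr (nd s \<Otimes>\<^sub>M nd s) (nd s) fst"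
    by (rule distr_cong) auto
  also have "\<dots> = nd s" by (rule prob_space.distr_pair_fst[OF nd_prob[OF s]])
  finally show ?thesis .
qed

lemma distr_nd_snd: "s > 0 \<Longrightarrow> distr (nd s \<Otimes>\<^sub>M nd s) borel snd = nd s"
proof -
  assume s: "s > 0"
  interpret pair_sigma_finite "nd s" "nd s"
    by (intro pair_sigma_finite.intro prob_space_imp_sigma_finite nd_prob s)
  have "distr (nd s \<Otimes>\<^sub>M nd s) borel snd
      = distr (distr (nd s \<Otimes>\<^sub>M nd s) (nd s \<Otimes>\<^sub>M nd s) (\<lambda>(x, y). (y, x))) borel snd"
    by (subst distr_pair_swap[symmetric]) simp
  also have "\<dots> = distr (nd s \<Otimes>\<^sub>M nd s) borel (snd \<circ> (\<lambda>(x, y). (y, x)))"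
    by (rule distr_distr) measurable
  also have "\<dots> = distr (nd s \<Otimes>\<^sub>M nd s) borel fst"
    by (rule distr_cong) auto
  finally show ?thesis using distr_nd_fst[OF s] by simp
qed

lemma (in prob_space) cgauss_parts:
  assumes X: "X \<in> borel_measurable M" and D: "distr M borel X = cgauss s" and s: "s > 0"
  shows "distributed M lborel (\<lambda>\<omega>. Re (X \<omega>)) (normal_density 0 (sqrt (s/2)))"
    and "distributed M lborel (\<lambda>\<omega>. Im (X \<omega>)) (normal_density 0 (sqrt (s/2)))"
    and "indep_var borel (\<lambda>\<omega>. Re (X \<omega>)) borel (\<lambda>\<omega>. Im (X \<omega>))"
proof -
  have C: "(\<lambda>(a, b). Complex a b) \<in> measurable (nd s \<Otimes>\<^sub>M nd s) borel" by measurable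
  have dRe: "distr M borel (\<lambda>\<omega>. Re (X \<omega>)) = nd s"
  proof -
    have "distr M borel (\<lambda>\<omega>. Re (X \<omega>)) = distr (distr M borel X) borel Re"
      using X by (subst distr_distr) (auto simp: comp_def)
    also have "\<dots> = distr (nd s \<Otimes>\<^sub>M nd s) borel (Re \<circ> (\<lambda>(a, b). Complex a b))"
      unfolding D cgauss_nd using C by (subst distr_distr) auto
    also have "\<dots> = distr (nd s \<Otimes>\<^sub>M nd s) borel fst"
      by (rule distr_cong) auto
    finally show ?thesis using distr_nd_fst[OF s] by simp
  qed
  have dIm: "distr M borel (\<lambda>\<omega>. Im (X \<omega>)) = nd s"
  proof -
    have "distr M borel (\<lambda>\<omega>. Im (X \<omega>)) = distr (distr M borel X) borel Im"
      using X by (subst distr_distr) (auto simp: comp_def)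
    also have "\<dots> = distr (nd s \<Otimes>\<^sub>M nd s) borel (Im \<circ> (\<lambda>(a, b). Complex a b))"
      unfolding D cgauss_nd using C by (subst distr_distr) auto
    also have "\<dots> = distr (nd s \<Otimes>\<^sub>M nd s) borel snd"
      by (rule distr_cong) auto
    finally show ?thesis using distr_nd_snd[OF s] by simp
  qed
  show "distributed M lborel (\<lambda>\<omega>. Re (X \<omega>)) (normal_density 0 (sqrt (s/2)))"
    unfolding distributed_def
  proof (intro conjI)
    have "distr M lborel (\<lambda>\<omega>. Re (X \<omega>)) = distr M borel (\<lambda>\<omega>. Re (X \<omega>))"
      by (rule distr_cong) auto
    then show "distr M lborel (\<lambda>\<omega>. Re (X \<omega>)) = density lborel (normal_density 0 (sqrt (s/2)))"
      using dRe by (simp add: nd_def)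
  qed (use X in auto)
  show "distributed M lborel (\<lambda>\<omega>. Im (X \<omega>)) (normal_density 0 (sqrt (s/2)))"
    unfolding distributed_def
  proof (intro conjI)
    have "distr M lborel (\<lambda>\<omega>. Im (X \<omega>)) = distr M borel (\<lambda>\<omega>. Im (X \<omega>))"
      by (rule distr_cong) auto
    then show "distr M lborel (\<lambda>\<omega>. Im (X \<omega>)) = density lborel (normal_density 0 (sqrt (s/2)))"
      using dIm by (simp add: nd_def)
  qed (use X in auto)
  show "indep_var borel (\<lambda>\<omega>. Re (X \<omega>)) borel (\<lambda>\<omega>. Im (X \<omega>))"
    unfolding indep_var_distribution_eq
  proof (intro conjI)
    show "random_variable borel (\<lambda>\<omega>. Re (X \<omega>))" "random_variable borel (\<lambda>\<omega>. Im (X \<omega>))"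
      using X by auto
    have "distr M (borel \<Otimes>\<^sub>M borel) (\<lambda>\<omega>. (Re (X \<omega>), Im (X \<omega>)))
        = distr (distr M borel X) (borel \<Otimes>\<^sub>M borel) (\<lambda>c. (Re c, Im c))"
      using X by (subst distr_distr) (auto simp: comp_def)
    also have "\<dots> = distr (nd s \<Otimes>\<^sub>M nd s) (borel \<Otimes>\<^sub>M borel) ((\<lambda>c. (Re c, Im c)) \<circ> (\<lambda>(a, b). Complex a b))"
      unfolding D cgauss_nd using C by (subst distr_distr) auto
    also have "\<dots> = distr (nd s \<Otimes>\<^sub>M nd s) (borel \<Otimes>\<^sub>M borel) (\<lambda>x. x)"
      by (rule distr_cong) auto
    also have "\<dots> = nd s \<Otimes>\<^sub>M nd s"
      by (rule distr_id2) simp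
    finally show "distr M borel (\<lambda>\<omega>. Re (X \<omega>)) \<Otimes>\<^sub>M distr M borel (\<lambda>\<omega>. Im (X \<omega>))
        = distr M (borel \<Otimes>\<^sub>M borel) (\<lambda>\<omega>. (Re (X \<omega>), Im (X \<omega>)))"
      using dRe dIm by simp
  qed
qed


lemma prod_times_bool:
  "(\<Prod>j\<in>I \<times> (UNIV::bool set). f j) = (\<Prod>i\<in>I. f (i, True) * f (i, False))"
proof -
  have "(\<Prod>j\<in>I \<times> (UNIV::bool set). f j) = (\<Prod>i\<in>I. \<Prod>b\<in>UNIV. f (i, b))"
    by (subst prod.cartesian_product) (simp add: case_prod_beta')
  also have "\<dots> = (\<Prod>i\<in>I. f (i, True) * f (i, False))"
    by (simp add: UNIV_bool mult.commute)
  finally show ?thesis .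
qed

lemma (in prob_space) split_indep:
  fixes X :: "'i \<Rightarrow> 'a \<Rightarrow> complex"
  assumes ind: "indep_vars (\<lambda>_. borel) X I" and fin: "finite I" and ne: "I \<noteq> {}"
    and RI: "\<And>i. i \<in> I \<Longrightarrow> indep_var borel (\<lambda>\<omega>. Re (X i \<omega>)) borel (\<lambda>\<omega>. Im (X i \<omega>))"
  shows "indep_vars (\<lambda>_. borel) (\<lambda>(i, b) \<omega>. if b then Re (X i \<omega>) else Im (X i \<omega>)) (I \<times> UNIV)"
proof -
  let ?xi = "\<lambda>(i, b) \<omega>. if b then Re (X i \<omega>) else Im (X i \<omega>)"
  have rvX: "\<And>i. i \<in> I \<Longrightarrow> X i \<in> borel_measurable M"
    using ind unfolding indep_vars_def by auto
  have rv: "random_variable borel (?xi j)" if jI: "j \<in> I \<times> UNIV" for j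
  proof -
    obtain i b where j: "j = (i, b)" and i: "i \<in> I" using jI by (cases j) auto
    show ?thesis using rvX[OF i] unfolding j by (cases b) auto
  qed
  show ?thesis
  proof (subst indep_vars_finite[where E = "\<lambda>_. sets borel"], goal_cases)
    case 1 show ?case using ne by simp
  next
    case 2 show ?case using fin by simp
  next
    case (3 j) show ?case by (rule sym, rule sets.sigma_sets_eq)
  next
    case (4 j) show ?case by (rule rv) fact
  next
    case (5 j) show ?case by (auto simp: Int_stable_def)
  next
    case (6 j) show ?case by simp
  next
    case (7 j) show ?case by auto
  next
    case 8
    show ?case
    proof
      fix A :: "'i \<times> bool \<Rightarrow> real set" assume A: "A \<in> (\<Pi> j\<in>I \<times> UNIV. sets borel)"
      define B where "B i = {c. Re c \<in> A (i, True) \<and> Im c \<in> A (i, False)}" for i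
      have AT: "A (i, True) \<in> sets borel" and AF: "A (i, False) \<in> sets borel" if "i \<in> I" for i
        using A that by auto
      have B: "B i \<in> sets borel" if i: "i \<in> I" for i
      proof -
        have "B i = (\<lambda>c. (Re c, Im c)) -` (A (i, True) \<times> A (i, False)) \<inter> space borel"
          by (auto simp: B_def)
        also have "\<dots> \<in> sets borel"
          by (rule measurable_sets[of _ borel "borel \<Otimes>\<^sub>M borel"]) (auto intro!: pair_measureI AT AF i)
        finally show ?thesis .
      qed
      have eq: "(\<Inter>j\<in>I \<times> UNIV. ?xi j -` A j \<inter> space M) = (\<Inter>i\<in>I. X i -` B i \<inter> space M)"
      proof (intro equalityI subsetI)
        fix \<omega> assume "\<omega> \<in> (\<Inter>j\<in>I \<times> UNIV. ?xi j -` A j \<inter> space M)"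
        then have "\<And>i b. i \<in> I \<Longrightarrow> \<omega> \<in> ?xi (i, b) -` A (i, b) \<inter> space M" by blast
        from this[of _ True] this[of _ False] show "\<omega> \<in> (\<Inter>i\<in>I. X i -` B i \<inter> space M)"
          using ne by (auto simp: B_def)
      next
        fix \<omega> assume "\<omega> \<in> (\<Inter>i\<in>I. X i -` B i \<inter> space M)"
        then have "\<And>i. i \<in> I \<Longrightarrow> \<omega> \<in> X i -` B i \<inter> space M" by blast
        then show "\<omega> \<in> (\<Inter>j\<in>I \<times> UNIV. ?xi j -` A j \<inter> space M)"
          using ne by (auto simp: B_def)
      qed
      have pB: "prob (X i -` B i \<inter> space M) =
          prob (?xi (i, True) -` A (i, True) \<inter> space M) * prob (?xi (i, False) -` A (i, False) \<inter> space M)"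
        if i: "i \<in> I" for i
      proof -
        have "X i -` B i \<inter> space M = (\<lambda>\<omega>. (Re (X i \<omega>), Im (X i \<omega>))) -` (A (i, True) \<times> A (i, False)) \<inter> space M"
          by (auto simp: B_def)
        then show ?thesis using indep_varD[OF RI[OF i] AT[OF i] AF[OF i]] by simp
      qed
      have "prob (\<Inter>j\<in>I \<times> UNIV. ?xi j -` A j \<inter> space M) = (\<Prod>i\<in>I. prob (X i -` B i \<inter> space M))"
        unfolding eq by (rule indep_varsD_finite[OF ind ne fin B])
      also have "\<dots> = (\<Prod>j\<in>I \<times> UNIV. prob (?xi j -` A j \<inter> space M))"
        unfolding prod_times_bool by (rule prod.cong[OF refl]) (rule pB)
      finally show "prob (\<Inter>j\<in>I \<times> UNIV. ?xi j -` A j \<inter> space M) = (\<Prod>j\<in>I \<times> UNIV. prob (?xi j -` A j \<inter> space M))" .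
    qed
  qed
qed


lemma (in prob_space) coords_indep:
  fixes z :: "'a \<Rightarrow> nat \<Rightarrow> complex"
  assumes K: "K \<ge> 1" and s: "s > 0"
    and zm: "z \<in> measurable M (PiM {..<K} (\<lambda>_. borel))"
    and zd: "distr M (PiM {..<K} (\<lambda>_. borel)) z = cn_iid K s"
  defines "Zc \<equiv> \<lambda>i \<omega>. if i < K then z \<omega> i else 0"
  shows "indep_vars (\<lambda>_. borel) Zc {..<K}"
    and "\<And>i. i < K \<Longrightarrow> distr M borel (Zc i) = cgauss s"
    and "\<And>i. Zc i \<in> borel_measurable M"
proof -
  have zi: "(\<lambda>\<omega>. z \<omega> i) \<in> borel_measurable M" if "i < K" for i
    by (rule measurable_compose[OF zm measurable_component_singleton]) (use that in auto)
  show rv: "Zc i \<in> borel_measurable M" for i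
  proof (cases "i < K")
    case True
    then have "Zc i = (\<lambda>\<omega>. z \<omega> i)" by (simp add: Zc_def)
    then show ?thesis using zi True by simp
  next
    case False
    then have "Zc i = (\<lambda>\<omega>. 0)" by (simp add: Zc_def fun_eq_iff)
    then show ?thesis by simp
  qed
  show D: "distr M borel (Zc i) = cgauss s" if i: "i < K" for i
  proof -
    have "distr M borel (Zc i) = distr M borel ((\<lambda>x. x i) \<circ> z)"
      by (rule distr_cong) (use i in \<open>auto simp: Zc_def\<close>)
    also have "\<dots> = distr (distr M (PiM {..<K} (\<lambda>_. borel)) z) borel (\<lambda>x. x i)"
      by (rule distr_distr[symmetric]) (use i zm in auto)
    also have "\<dots> = distr (PiM {..<K} (\<lambda>_. cgauss s)) borel (\<lambda>x. x i)"
      unfolding zd cn_iid_def ..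
    also have "\<dots> = distr (PiM {..<K} (\<lambda>_. cgauss s)) (cgauss s) (\<lambda>x. x i)"
      by (rule distr_cong) (auto simp: cgauss_def)
    also have "\<dots> = cgauss s"
      by (rule distr_PiM_component) (use i prob_cgauss[OF s] in auto)
    finally show ?thesis .
  qed
  show "indep_vars (\<lambda>_. borel) Zc {..<K}"
  proof (subst indep_vars_iff_distr_eq_PiM)
    show "{..<K} \<noteq> {}" using K by (auto simp: lessThan_empty_iff)
    show "random_variable borel (Zc i)" for i by (rule rv)
    have "distr M (\<Pi>\<^sub>M i\<in>{..<K}. borel) (\<lambda>x. \<lambda>i\<in>{..<K}. Zc i x) = distr M (\<Pi>\<^sub>M i\<in>{..<K}. borel) z"
    proof (rule distr_cong)
      fix \<omega> assume "\<omega> \<in> space M"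
      then have "z \<omega> \<in> space (PiM {..<K} (\<lambda>_. borel))" using zm by (auto simp: measurable_def)
      then have "z \<omega> \<in> extensional {..<K}" by (simp add: space_PiM PiE_def)
      then show "(\<lambda>i\<in>{..<K}. Zc i \<omega>) = z \<omega>"
        by (auto simp: Zc_def fun_eq_iff extensional_def)
    qed auto
    also have "\<dots> = (\<Pi>\<^sub>M i\<in>{..<K}. cgauss s)" unfolding zd cn_iid_def ..
    also have "\<dots> = (\<Pi>\<^sub>M i\<in>{..<K}. distr M borel (Zc i))"
      by (rule PiM_cong) (auto simp: D)
    finally show "distr M (\<Pi>\<^sub>M i\<in>{..<K}. borel) (\<lambda>x. \<lambda>i\<in>{..<K}. Zc i x) = (\<Pi>\<^sub>M i\<in>{..<K}. distr M borel (Zc i))" .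
  qed
qed


lemma (in prob_space) block_sums:
  fixes \<xi> :: "nat \<times> bool \<Rightarrow> 'a \<Rightarrow> real"
  assumes ind: "indep_vars (\<lambda>_. borel) \<xi> ({..<Mm * Nn} \<times> UNIV)"
    and Mm: "Mm \<ge> 1" and Nn: "Nn \<ge> 1" and sig: "\<sigma> > 0"
    and nd: "\<And>j. j \<in> {..<Mm * Nn} \<times> UNIV \<Longrightarrow> distributed M lborel (\<xi> j) (normal_density 0 \<sigma>)"
  defines "\<eta> \<equiv> \<lambda>(m, b) \<omega>. (1 / real Nn) * (\<Sum>n<Nn. \<xi> (n * Mm + m, b) \<omega>)"
  shows "indep_vars (\<lambda>_. borel) \<eta> ({..<Mm} \<times> UNIV)"
    and "\<And>j. j \<in> {..<Mm} \<times> UNIV \<Longrightarrow> distributed M lborel (\<eta> j) (normal_density 0 (sqrt (\<sigma>\<^sup>2 / real Nn)))"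
proof -
  define Kb :: "nat \<times> bool \<Rightarrow> (nat \<times> bool) set" where "Kb = (\<lambda>(m, b). (\<lambda>n. (n * Mm + m, b)) ` {..<Nn})"
  have inj: "inj_on (\<lambda>n. (n * Mm + m, b)) {..<Nn}" for m and b :: bool
    using Mm by (auto simp: inj_on_def)
  have lt: "n * Mm + m < Mm * Nn" if "n < Nn" "m < Mm" for n m
  proof -
    have "n * Mm + m < n * Mm + Mm" using that by simp
    also have "\<dots> = (Suc n) * Mm" by simp
    also have "\<dots> \<le> Nn * Mm" using that by (intro mult_right_mono) auto
    finally show ?thesis by (simp add: mult.commute)
  qed
  have Ksub: "Kb j \<subseteq> {..<Mm * Nn} \<times> UNIV" if "j \<in> {..<Mm} \<times> UNIV" for j
    using that lt by (auto simp: Kb_def)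
  have disj: "disjoint_family_on Kb ({..<Mm} \<times> UNIV)"
  proof (unfold disjoint_family_on_def, intro ballI impI)
    fix j k assume jL: "j \<in> {..<Mm} \<times> (UNIV :: bool set)" and kL: "k \<in> {..<Mm} \<times> (UNIV :: bool set)" and jk: "j \<noteq> k"
    obtain m b where j: "j = (m, b)" and m: "m < Mm" using jL by (cases j) auto
    obtain m' b' where k: "k = (m', b')" and m': "m' < Mm" using kL by (cases k) auto
    have key: "m = m'" if "n * Mm + m = n' * Mm + m'" for n n'
    proof -
      have "(n * Mm + m) mod Mm = (n' * Mm + m') mod Mm" using that by simp
      with m m' show "m = m'" by simp
    qed
    show "Kb j \<inter> Kb k = {}"
      using key jk unfolding j k Kb_def by auto
  qed
  have R: "indep_vars (\<lambda>j. PiM (Kb j) (\<lambda>_. borel)) (\<lambda>j \<omega>. restrict (\<lambda>i. \<xi> i \<omega>) (Kb j)) ({..<Mm} \<times> UNIV)"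
    by (rule indep_vars_restrict[OF ind Ksub disj])
  define Y where "Y = (\<lambda>(m, b) (f :: nat \<times> bool \<Rightarrow> real). (1 / real Nn) * (\<Sum>n<Nn. f (n * Mm + m, b)))"
  have Ym: "Y j \<in> borel_measurable (PiM (Kb j) (\<lambda>_. borel))" for j
  proof -
    obtain m b where j: "j = (m, b)" by (cases j)
    have "(\<lambda>f :: nat \<times> bool \<Rightarrow> real. f (n * Mm + m, b)) \<in> borel_measurable (PiM (Kb j) (\<lambda>_. borel))" if "n < Nn" for n
      by (rule measurable_component_singleton) (use that in \<open>auto simp: Kb_def j\<close>)
    then have "(\<lambda>f :: nat \<times> bool \<Rightarrow> real. \<Sum>n<Nn. f (n * Mm + m, b)) \<in> borel_measurable (PiM (Kb j) (\<lambda>_. borel))"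
      by (intro borel_measurable_sum[where f="\<lambda>n f. f (n * Mm + m, b)"]) auto
    then have "(\<lambda>f :: nat \<times> bool \<Rightarrow> real. (\<Sum>n<Nn. f (n * Mm + m, b)) / real Nn) \<in> borel_measurable (PiM (Kb j) (\<lambda>_. borel))"
      by (intro borel_measurable_divide) auto
    then show ?thesis unfolding Y_def j by simp
  qed
  have "indep_vars (\<lambda>_. borel) (\<lambda>j \<omega>. Y j (restrict (\<lambda>i. \<xi> i \<omega>) (Kb j))) ({..<Mm} \<times> UNIV)"
    by (rule indep_vars_compose2[OF R Ym])
  also have "?this \<longleftrightarrow> indep_vars (\<lambda>_. borel) \<eta> ({..<Mm} \<times> UNIV)"
  proof (rule indep_vars_cong)
    fix j assume "j \<in> {..<Mm} \<times> (UNIV :: bool set)"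
    obtain m b where j: "j = (m, b)" by (cases j)
    show "(\<lambda>\<omega>. Y j (restrict (\<lambda>i. \<xi> i \<omega>) (Kb j))) = \<eta> j"
      unfolding j Y_def \<eta>_def Kb_def by (auto simp: fun_eq_iff intro!: sum.cong)
  qed auto
  finally show "indep_vars (\<lambda>_. borel) \<eta> ({..<Mm} \<times> UNIV)" .
  fix j assume jL: "j \<in> {..<Mm} \<times> (UNIV :: bool set)"
  obtain m b where j: "j = (m, b)" and m: "m < Mm" using jL by (cases j) auto
  have S: "distributed M lborel (\<lambda>x. \<Sum>i\<in>Kb j. \<xi> i x)
      (normal_density (\<Sum>i\<in>Kb j. 0) (sqrt (\<Sum>i\<in>Kb j. \<sigma>\<^sup>2)))"
  proof (rule sum_indep_normal)
    show "finite (Kb j)" by (simp add: Kb_def j)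
    show "Kb j \<noteq> {}" using Nn by (auto simp: Kb_def j lessThan_empty_iff)
    show "indep_vars (\<lambda>i. borel) \<xi> (Kb j)" by (rule indep_vars_subset[OF ind Ksub[OF jL]])
    show "\<And>i. i \<in> Kb j \<Longrightarrow> 0 < \<sigma>" using sig by simp
    show "\<And>i. i \<in> Kb j \<Longrightarrow> distributed M lborel (\<xi> i) (normal_density 0 \<sigma>)"
      using nd Ksub[OF jL] by auto
  qed
  have cardK: "card (Kb j) = Nn" unfolding Kb_def j using card_image[OF inj] by simp
  have sumK: "(\<Sum>i\<in>Kb j. \<xi> i x) = (\<Sum>n<Nn. \<xi> (n * Mm + m, b) x)" for x
    unfolding Kb_def j by (simp add: sum.reindex[OF inj])
  have S2: "distributed M lborel (\<lambda>x. \<Sum>n<Nn. \<xi> (n * Mm + m, b) x) (normal_density 0 (sqrt (real Nn * \<sigma>\<^sup>2)))"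
    using S by (simp add: sumK cardK)
  have pos: "0 < sqrt (real Nn * \<sigma>\<^sup>2)" using Nn sig by simp
  have A: "distributed M lborel (\<lambda>x. 0 + (1 / real Nn) * (\<Sum>n<Nn. \<xi> (n * Mm + m, b) x))
      (normal_density (0 + (1 / real Nn) * 0) (\<bar>1 / real Nn\<bar> * sqrt (real Nn * \<sigma>\<^sup>2)))"
    by (rule normal_density_affine[OF S2 pos]) (use Nn in simp)
  have eqs: "\<bar>1 / real Nn\<bar> * sqrt (real Nn * \<sigma>\<^sup>2) = sqrt (\<sigma>\<^sup>2 / real Nn)"
  proof -
    have "sqrt (\<sigma>\<^sup>2 / real Nn) = sqrt ((real Nn * \<sigma>\<^sup>2) / (real Nn)\<^sup>2)"
      using Nn by (simp add: power2_eq_square)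
    also have "\<dots> = sqrt (real Nn * \<sigma>\<^sup>2) / real Nn"
      by (simp add: real_sqrt_divide)
    finally show ?thesis by simp
  qed
  show "distributed M lborel (\<eta> j) (normal_density 0 (sqrt (\<sigma>\<^sup>2 / real Nn)))"
    using A unfolding eqs by (simp add: \<eta>_def j)
qed


lemma (in prob_space) pair_up:
  fixes \<eta> :: "nat \<times> bool \<Rightarrow> 'a \<Rightarrow> real"
  assumes ind: "indep_vars (\<lambda>_. borel) \<eta> ({..<Mm} \<times> UNIV)" and Mm: "Mm \<ge> 1" and t: "t > 0"
    and nd: "\<And>j. j \<in> {..<Mm} \<times> UNIV \<Longrightarrow> distributed M lborel (\<eta> j) (normal_density 0 (sqrt (t/2)))"
    and meas: "\<And>j. \<eta> j \<in> borel_measurable M"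
  defines "W \<equiv> \<lambda>m \<omega>. Complex (\<eta> (m, True) \<omega>) (\<eta> (m, False) \<omega>)"
  shows "has_cn_iid M Mm t (\<lambda>\<omega>. \<lambda>m\<in>{..<Mm}. W m \<omega>)"
proof -
  have Wm: "W m \<in> borel_measurable M" for m
    unfolding W_def by (intro Complex_measurable2 meas)
  define Kp :: "nat \<Rightarrow> (nat \<times> bool) set" where "Kp m = {m} \<times> UNIV" for m
  have indW: "indep_vars (\<lambda>_. borel) W {..<Mm}"
  proof -
    have R: "indep_vars (\<lambda>m. PiM (Kp m) (\<lambda>_. borel)) (\<lambda>m \<omega>. restrict (\<lambda>i. \<eta> i \<omega>) (Kp m)) {..<Mm}"
      by (rule indep_vars_restrict[OF ind]) (auto simp: Kp_def disjoint_family_on_def)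
    define Yp where "Yp m (f :: nat \<times> bool \<Rightarrow> real) = Complex (f (m, True)) (f (m, False))" for m f
    have Ym: "Yp m \<in> borel_measurable (PiM (Kp m) (\<lambda>_. borel))" for m
    proof -
      have "(\<lambda>f :: nat \<times> bool \<Rightarrow> real. f (m, b)) \<in> borel_measurable (PiM (Kp m) (\<lambda>_. borel))" for b
        by (rule measurable_component_singleton) (auto simp: Kp_def)
      then show ?thesis unfolding Yp_def by (intro Complex_measurable2)
    qed
    have "indep_vars (\<lambda>_. borel) (\<lambda>m \<omega>. Yp m (restrict (\<lambda>i. \<eta> i \<omega>) (Kp m))) {..<Mm}"
      by (rule indep_vars_compose2[OF R Ym])
    also have "?this \<longleftrightarrow> indep_vars (\<lambda>_. borel) W {..<Mm}"
      by (rule indep_vars_cong) (auto simp: Yp_def W_def Kp_def fun_eq_iff)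
    finally show ?thesis .
  qed
  have dW: "distr M borel (W m) = cgauss t" if m: "m < Mm" for m
  proof -
    define Kq :: "bool \<Rightarrow> (nat \<times> bool) set" where "Kq b = {(m, b)}" for b
    have R: "indep_vars (\<lambda>b. PiM (Kq b) (\<lambda>_. borel)) (\<lambda>b \<omega>. restrict (\<lambda>i. \<eta> i \<omega>) (Kq b)) UNIV"
      by (rule indep_vars_restrict[OF ind]) (use m in \<open>auto simp: Kq_def disjoint_family_on_def\<close>)
    have Ym: "(\<lambda>f :: nat \<times> bool \<Rightarrow> real. f (m, b)) \<in> borel_measurable (PiM (Kq b) (\<lambda>_. borel))" for b
      by (rule measurable_component_singleton) (auto simp: Kq_def)
    have "indep_vars (\<lambda>_. borel) (\<lambda>b \<omega>. restrict (\<lambda>i. \<eta> i \<omega>) (Kq b) (m, b)) UNIV"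
      by (rule indep_vars_compose2[OF R Ym])
    also have "?this \<longleftrightarrow> indep_var borel (\<eta> (m, True)) borel (\<eta> (m, False))"
      unfolding indep_var_def
      by (rule indep_vars_cong) (auto simp: Kq_def fun_eq_iff split: bool.split)
    finally have iv: "indep_var borel (\<eta> (m, True)) borel (\<eta> (m, False))" .
    have dd: "distr M borel (\<eta> (m, b)) = nd t" for b
    proof -
      have "distr M borel (\<eta> (m, b)) = distr M lborel (\<eta> (m, b))"
        by (rule distr_cong) auto
      also have "\<dots> = nd t"
        using nd[of "(m, b)"] m unfolding distributed_def nd_def by auto
      finally show ?thesis .
    qed
    have "distr M borel (W m) = distr M borel ((\<lambda>(a, b). Complex a b) \<circ> (\<lambda>\<omega>. (\<eta> (m, True) \<omega>, \<eta> (m, False) \<omega>)))"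
      by (rule distr_cong) (auto simp: W_def)
    also have "\<dots> = distr (distr M (borel \<Otimes>\<^sub>M borel) (\<lambda>\<omega>. (\<eta> (m, True) \<omega>, \<eta> (m, False) \<omega>))) borel (\<lambda>(a, b). Complex a b)"
      by (rule distr_distr[symmetric]) (use meas in auto)
    also have "distr M (borel \<Otimes>\<^sub>M borel) (\<lambda>\<omega>. (\<eta> (m, True) \<omega>, \<eta> (m, False) \<omega>))
        = distr M borel (\<eta> (m, True)) \<Otimes>\<^sub>M distr M borel (\<eta> (m, False))"
      using iv unfolding indep_var_distribution_eq by simp
    also have "\<dots> = nd t \<Otimes>\<^sub>M nd t" by (simp add: dd)
    finally show ?thesis by (simp add: cgauss_nd)
  qed
  show ?thesis
    unfolding has_cn_iid_def
  proof (intro conjI)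
    show "(\<lambda>\<omega>. \<lambda>m\<in>{..<Mm}. W m \<omega>) \<in> measurable M (PiM {..<Mm} (\<lambda>_. borel))"
      by (intro measurable_restrict Wm)
    have "distr M (PiM {..<Mm} (\<lambda>_. borel)) (\<lambda>\<omega>. \<lambda>m\<in>{..<Mm}. W m \<omega>) = PiM {..<Mm} (\<lambda>m. distr M borel (W m))"
      using indW by (subst (asm) indep_vars_iff_distr_eq_PiM) (use Mm Wm in \<open>auto simp: lessThan_empty_iff\<close>)
    also have "\<dots> = PiM {..<Mm} (\<lambda>_. cgauss t)"
      by (rule PiM_cong) (auto simp: dW)
    finally show "distr M (PiM {..<Mm} (\<lambda>_. borel)) (\<lambda>\<omega>. \<lambda>m\<in>{..<Mm}. W m \<omega>) = cn_iid Mm t"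
      by (simp add: cn_iid_def)
  qed
qed


lemma (in prob_space) main_prob:
  fixes z :: "'a \<Rightarrow> nat \<Rightarrow> complex"
  assumes Mm: "Mm \<ge> 1" and Nn: "Nn \<ge> 1" and s: "s > 0"
    and zh: "has_cn_iid M (Mm * Nn) s z"
  shows "has_cn_iid M Mm (s / real Nn) (\<lambda>\<omega>. \<lambda>m\<in>{..<Mm}. (1 / of_nat Nn) * (\<Sum>n<Nn. z \<omega> (n * Mm + m)))"
proof -
  let ?K = "Mm * Nn"
  have K: "?K \<ge> 1" using Mm Nn by simp
  have zm: "z \<in> measurable M (PiM {..<?K} (\<lambda>_. borel))"
    and zd: "distr M (PiM {..<?K} (\<lambda>_. borel)) z = cn_iid ?K s"
    using zh unfolding has_cn_iid_def by auto
  define Zc where "Zc = (\<lambda>i \<omega>. if i < ?K then z \<omega> i else 0)"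
  note CI = coords_indep[OF K s zm zd, folded Zc_def]
  have RI: "indep_var borel (\<lambda>\<omega>. Re (Zc i \<omega>)) borel (\<lambda>\<omega>. Im (Zc i \<omega>))" if "i \<in> {..<?K}" for i
    using cgauss_parts(3)[OF CI(3) CI(2) s] that by (auto simp: Zc_def)
  define \<xi> where "\<xi> = (\<lambda>(i, b) \<omega>. if b then Re (Zc i \<omega>) else Im (Zc i \<omega>))"
  have indxi: "indep_vars (\<lambda>_. borel) \<xi> ({..<?K} \<times> UNIV)"
    unfolding \<xi>_def by (rule split_indep[OF CI(1) _ _ RI]) (use K in \<open>auto simp: lessThan_empty_iff\<close>)
  have ndxi: "distributed M lborel (\<xi> j) (normal_density 0 (sqrt (s/2)))" if jK: "j \<in> {..<?K} \<times> UNIV" for j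
  proof -
    obtain i b where j: "j = (i, b)" and i: "i < ?K" using jK by (cases j) auto
    show ?thesis
    proof (cases b)
      case True
      then have "\<xi> j = (\<lambda>\<omega>. Re (Zc i \<omega>))" by (simp add: \<xi>_def j)
      then show ?thesis using cgauss_parts(1)[OF CI(3) CI(2)[OF i] s] by (simp add: Zc_def)
    next
      case False
      then have "\<xi> j = (\<lambda>\<omega>. Im (Zc i \<omega>))" by (simp add: \<xi>_def j)
      then show ?thesis using cgauss_parts(2)[OF CI(3) CI(2)[OF i] s] by (simp add: Zc_def)
    qed
  qed
  have xim: "\<xi> j \<in> borel_measurable M" for j
  proof -
    obtain i b where j: "j = (i, b)" by (cases j)
    show ?thesis using CI(3)[of i] unfolding \<xi>_def j Zc_def by (cases b) auto
  qed
  define \<eta> where "\<eta> = (\<lambda>(m, b) \<omega>. (1 / real Nn) * (\<Sum>n<Nn. \<xi> (n * Mm + m, b) \<omega>))"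
  have sig: "sqrt (s/2) > 0" using s by simp
  note BS = block_sums[OF indxi Mm Nn sig ndxi, folded \<eta>_def]
  have sq: "sqrt ((sqrt (s / 2))\<^sup>2 / real Nn) = sqrt ((s / real Nn) / 2)"
    using s by simp
  have etam: "\<eta> j \<in> borel_measurable M" for j
  proof -
    obtain m b where j: "j = (m, b)" by (cases j)
    show ?thesis unfolding \<eta>_def j using xim by auto
  qed
  have H: "has_cn_iid M Mm (s / real Nn) (\<lambda>\<omega>. \<lambda>m\<in>{..<Mm}. Complex (\<eta> (m, True) \<omega>) (\<eta> (m, False) \<omega>))"
  proof (rule pair_up[OF BS(1) Mm])
    show "s / real Nn > 0" using s Nn by simp
    show "\<And>j. j \<in> {..<Mm} \<times> UNIV \<Longrightarrow> distributed M lborel (\<eta> j) (normal_density 0 (sqrt (s / real Nn / 2)))"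
      using BS(2)[unfolded sq] .
    show "\<And>j. random_variable borel (\<eta> j)" by (rule etam)
  qed
  have lt: "n * Mm + m < Mm * Nn" if "n < Nn" "m < Mm" for n m
  proof -
    have "n * Mm + m < n * Mm + Mm" using that by simp
    also have "\<dots> = (Suc n) * Mm" by simp
    also have "\<dots> \<le> Nn * Mm" using that by (intro mult_right_mono) auto
    finally show ?thesis by (simp add: mult.commute)
  qed
  have "(\<lambda>\<omega>. \<lambda>m\<in>{..<Mm}. Complex (\<eta> (m, True) \<omega>) (\<eta> (m, False) \<omega>))
      = (\<lambda>\<omega>. \<lambda>m\<in>{..<Mm}. (1 / of_nat Nn) * (\<Sum>n<Nn. z \<omega> (n * Mm + m)))"
  proof (intro ext)
    fix \<omega> m
    show "(\<lambda>m\<in>{..<Mm}. Complex (\<eta> (m, True) \<omega>) (\<eta> (m, False) \<omega>)) m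
        = (\<lambda>m\<in>{..<Mm}. (1 / of_nat Nn) * (\<Sum>n<Nn. z \<omega> (n * Mm + m))) m"
    proof (cases "m < Mm")
      case True
      have e1: "(\<Sum>n<Nn. \<xi> (n * Mm + m, b) \<omega>) = (\<Sum>n<Nn. if b then Re (z \<omega> (n * Mm + m)) else Im (z \<omega> (n * Mm + m)))" for b
        by (rule sum.cong) (use lt True in \<open>auto simp: \<xi>_def Zc_def\<close>)
      have "(1 / of_nat Nn) * (\<Sum>n<Nn. z \<omega> (n * Mm + m)) = (\<Sum>n<Nn. z \<omega> (n * Mm + m)) / of_nat Nn"
        by simp
      then show ?thesis using True
        by (simp add: complex_eq_iff \<eta>_def e1)
    qed simp
  qed
  with H show ?thesis by simp
qed

theorem lemma1:
  fixes M N mp np :: nat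
    and l k T T' Es Ep sigma2 Nr :: real
    and alpha :: complex
    and Xd :: "nat \<Rightarrow> nat \<Rightarrow> complex"
    and P :: "'w measure"
    and z :: "'w \<Rightarrow> nat \<Rightarrow> complex"
  assumes "M \<ge> 1" and "N \<ge> 1"
    and "0 < T" and "T < T'"
    and "Es > 0" and "Ep > 0" and "sigma2 > 0" and "Nr \<ge> 1"
    and "mp < M" and "np < N"
    and "prob_space P"
    and "has_cn_iid P (M * N) (sigma2 / Nr) z"
  shows "let x = (\<lambda>i. of_real (sqrt Es) * vecm M Xd i + of_real (sqrt Ep) * pilot M mp np i);
             y = (\<lambda>\<omega> i. alpha * mv (M * N) (Hm M N T T' l k) x i + z \<omega> i);
             u = (\<lambda>\<omega> m. (1 / of_nat N) * mv (M * N) (kron M M (\<lambda>_ _. 1) idm) (y \<omega>) m)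
         in \<exists>zt. has_cn_iid P M (sigma2 / (real N * Nr)) zt \<and>
              (\<forall>\<omega>\<in>space P. \<forall>m<M.
                 u \<omega> m = alpha * (of_real (sqrt Ep) / of_nat N * gu M N T T' mp l k m
                          + of_real (sqrt Es) / of_nat N *
                              mv M (mm M (Dt_pow M N T T' k) (Cm M l)) (\<lambda>q. \<Sum>n<N. Xd q n) m)
                        + zt \<omega> m)"
proof -
  interpret prob_space P by fact
  have s: "sigma2 / Nr > 0" using assms(7,8) by simp
  note H = main_prob[OF assms(1,2) s assms(12)]
  have eqs: "sigma2 / Nr / real N = sigma2 / (real N * Nr)" by (simp add: field_simps)
  let ?x = "\<lambda>i. of_real (sqrt Es) * vecm M Xd i + of_real (sqrt Ep) * pilot M mp np i"
  let ?zt = "\<lambda>\<omega>. \<lambda>m\<in>{..<M}. (1 / of_nat N) * (\<Sum>n<N. z \<omega> (n * M + m))"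
  show ?thesis
    unfolding Let_def
  proof (intro exI conjI ballI allI impI)
    show "has_cn_iid P M (sigma2 / (real N * Nr)) ?zt" using H[unfolded eqs] .
    fix \<omega> m assume m: "m < M"
    have "(1 / of_nat N) * mv (M * N) (kron M M (\<lambda>_ _. 1) idm)
            (\<lambda>i. alpha * mv (M * N) (Hm M N T T' l k) ?x i + z \<omega> i) m
        = (1 / of_nat N) * (\<Sum>n<N. alpha * mv (M * N) (Hm M N T T' l k) ?x (n * M + m) + z \<omega> (n * M + m))"
      by (simp add: u_eq[OF m])
    also have "\<dots> = alpha * ((1 / of_nat N) * (\<Sum>n<N. mv (M * N) (Hm M N T T' l k) ?x (n * M + m)))
                    + (1 / of_nat N) * (\<Sum>n<N. z \<omega> (n * M + m))"
      by (simp add: sum.distrib sum_distrib_left algebra_simps)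
    also have "\<dots> = alpha * (of_real (sqrt Ep) / of_nat N * gu M N T T' mp l k m
                          + of_real (sqrt Es) / of_nat N *
                              mv M (mm M (Dt_pow M N T T' k) (Cm M l)) (\<lambda>q. \<Sum>n<N. Xd q n) m)
                    + ?zt \<omega> m"
      unfolding det_final[OF assms(1,2) m assms(9,10)] using m by simp
    finally show "(1 / of_nat N) * mv (M * N) (kron M M (\<lambda>_ _. 1) idm)
            (\<lambda>i. alpha * mv (M * N) (Hm M N T T' l k) ?x i + z \<omega> i) m
        = alpha * (of_real (sqrt Ep) / of_nat N * gu M N T T' mp l k m
                          + of_real (sqrt Es) / of_nat N *
                              mv M (mm M (Dt_pow M N T T' k) (Cm M l)) (\<lambda>q. \<Sum>n<N. Xd q n) m)
                    + ?zt \<omega> m" .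
  qed
qed

end
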